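(* Let $\mathcal{A}$ be a fixed (non-random) partition of $\Theta$ into measurable sets, and let $(\theta_1,\mathbf{X}_1),\dots,(\theta_B,\mathbf{X}_B),(\theta,\mathbf{X})$ be i.i.d. pairs with $\theta_b \sim r$ and $\mathbf{X}_b \mid \theta_b$ distributed according to the statistical model at $\theta_b$ (and likewise for $(\theta,\mathbf{X})$). Fix $A \in \mathcal{A}$ with $\mathbb{P}(\theta \in A) > 0$ and $\alpha\in(0,1)$. Let $I_A = \{b \in \{1,\dots,B\} : \theta_b \in A\}$, define for $t\in\mathbb{R}$ $$\widehat H_B(t \mid A) = \frac{1}{|I_A|+1}\Big(\sum_{b \in I_A} \mathbb{I}\big(\tau(\mathbf{X}_b,\theta_b) \le t\big) + 1\Big),$$ and let $\widehat C_{A,B} = \inf\{t \in \mathbb{R} : \widehat H_B(t\mid A) \ge \alpha\}$ (the adjusted $\alpha$-quantile; possibly $-\infty$). For $\theta' \in A$ set $\widehat C_{\theta',B} := \widehat C_{A,B}$, and let $\widehat R_B(\mathbf{X}) = \{\theta' \in \Theta : \tau(\mathbf{X},\theta') \ge \widehat C_{\theta',B}\}$. Then $$\mathbb{P}\big(\theta \in \widehat R_B(\mathbf{X}) \mid \theta \in A\big) \ge 1-\alpha,$$ where the probability is over both the simulated data and the new pair $(\theta,\mathbf{X})$.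
   Context: A statistical model gives, for each parameter $\theta \in \Theta$, a distribution of the data $\mathbf{X}\in\mathcal{X}$; $r$ is a reference probability distribution on $\Theta$. A fixed measurable function $\tau : \mathcal{X}\times\Theta \to \mathbb{R}$ (a test statistic) is given, and for every $\theta$ the conditional distribution of $\tau(\mathbf{X},\theta)$ given $\theta$ is continuous (has no atoms). *)

theory Defs
  imports "HOL-Probability.Probability"
begin

definition joint_law ::
  "'t measure \<Rightarrow> 'x measure \<Rightarrow> ('t \<Rightarrow> 'x measure) \<Rightarrow> ('t \<times> 'x) measure" where
  "joint_law r MX K = r \<bind> (\<lambda>\<theta>. distr (K \<theta>) (r \<Otimes>\<^sub>M MX) (\<lambda>x. (\<theta>, x)))"

definition sample_space ::
  "'t measure \<Rightarrow> 'x measure \<Rightarrow> ('t \<Rightarrow> 'x measure) \<Rightarrow> nat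
     \<Rightarrow> ((nat \<Rightarrow> 't \<times> 'x) \<times> ('t \<times> 'x)) measure" where
  "sample_space r MX K B =
     (\<Pi>\<^sub>M b\<in>{1..B}. joint_law r MX K) \<Otimes>\<^sub>M joint_law r MX K"

definition I_set :: "nat \<Rightarrow> 't set \<Rightarrow> (nat \<Rightarrow> 't \<times> 'x) \<Rightarrow> nat set" where
  "I_set B A s = {b \<in> {1..B}. fst (s b) \<in> A}"

definition H_hat ::
  "('x \<Rightarrow> 't \<Rightarrow> real) \<Rightarrow> nat \<Rightarrow> 't set \<Rightarrow> (nat \<Rightarrow> 't \<times> 'x) \<Rightarrow> real \<Rightarrow> real" where
  "H_hat \<tau> B A s t =
     (1 / (real (card (I_set B A s)) + 1)) *
     ((\<Sum>b\<in>I_set B A s. if \<tau> (snd (s b)) (fst (s b)) \<le> t then 1 else 0) + 1)"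

definition C_hat ::
  "('x \<Rightarrow> 't \<Rightarrow> real) \<Rightarrow> real \<Rightarrow> nat \<Rightarrow> 't set \<Rightarrow> (nat \<Rightarrow> 't \<times> 'x) \<Rightarrow> ereal" where
  "C_hat \<tau> \<alpha> B A s = Inf {ereal t | t. H_hat \<tau> B A s t \<ge> \<alpha>}"

definition cell :: "'t set set \<Rightarrow> 't \<Rightarrow> 't set" where
  "cell \<A> \<theta>' = (THE A. A \<in> \<A> \<and> \<theta>' \<in> A)"

definition R_hat ::
  "'t measure \<Rightarrow> 't set set \<Rightarrow> ('x \<Rightarrow> 't \<Rightarrow> real) \<Rightarrow> real \<Rightarrow> nat
     \<Rightarrow> (nat \<Rightarrow> 't \<times> 'x) \<Rightarrow> 'x \<Rightarrow> 't set" where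
  "R_hat r \<A> \<tau> \<alpha> B s x =
     {\<theta>' \<in> space r. ereal (\<tau> x \<theta>') \<ge> C_hat \<tau> \<alpha> B (cell \<A> \<theta>') s}"

end

theory Submission
  imports Defs
begin

lemma J_props:
  fixes r :: "'t measure" and MX :: "'x measure" and K :: "'t \<Rightarrow> 'x measure" and A :: "'t set"
  assumes r_prob: "prob_space r"
    and K_meas: "K \<in> r \<rightarrow>\<^sub>M subprob_algebra MX"
    and K_prob: "\<And>\<theta>. \<theta> \<in> space r \<Longrightarrow> prob_space (K \<theta>)"
    and A: "A \<in> sets r"
  shows "sets (joint_law r MX K) = sets (r \<Otimes>\<^sub>M MX)"
    and "space (joint_law r MX K) = space r \<times> space MX"
    and "prob_space (joint_law r MX K)"
    and "measure (joint_law r MX K) (A \<times> space MX) = measure r A"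
proof -
  let ?N = "\<lambda>\<theta>. distr (K \<theta>) (r \<Otimes>\<^sub>M MX) (\<lambda>x. (\<theta>, x))"
  have N: "?N \<in> r \<rightarrow>\<^sub>M subprob_algebra (r \<Otimes>\<^sub>M MX)"
    by (rule measurable_distr2[OF _ K_meas]) (simp only: case_prod_Pair, rule measurable_ident)
  have ne: "space r \<noteq> {}" using r_prob prob_space.not_empty by blast
  have sN: "\<And>\<theta>. \<theta> \<in> space r \<Longrightarrow> sets (?N \<theta>) = sets (r \<Otimes>\<^sub>M MX)" by simp
  show S: "sets (joint_law r MX K) = sets (r \<Otimes>\<^sub>M MX)"
    unfolding joint_law_def by (rule sets_bind[OF sN ne])
  show SP: "space (joint_law r MX K) = space r \<times> space MX"
    unfolding joint_law_def by (simp add: space_bind[OF sN ne] space_pair_measure)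
  have Ks: "\<And>\<theta>. \<theta> \<in> space r \<Longrightarrow> sets (K \<theta>) = sets MX"
    using measurable_space[OF K_meas] by (simp add: space_subprob_algebra)
  have Kmeas: "\<And>\<theta>. \<theta> \<in> space r \<Longrightarrow> (\<lambda>x. (\<theta>, x)) \<in> K \<theta> \<rightarrow>\<^sub>M r \<Otimes>\<^sub>M MX"
    using measurable_Pair1'[of _ r MX] Ks measurable_cong_sets[OF Ks refl] by (metis eta_contract_eq)
  have e: "emeasure (joint_law r MX K) (C \<times> space MX) = emeasure r C" if C: "C \<in> sets r" for C
  proof -
    have "emeasure (joint_law r MX K) (C \<times> space MX) = \<integral>\<^sup>+\<theta>. emeasure (?N \<theta>) (C \<times> space MX) \<partial>r"
      unfolding joint_law_def by (rule emeasure_bind[OF ne N pair_measureI[OF C sets.top]])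
    also have "\<dots> = \<integral>\<^sup>+\<theta>. indicator C \<theta> \<partial>r"
    proof (rule nn_integral_cong)
      fix \<theta> assume th: "\<theta> \<in> space r"
      interpret Kp: prob_space "K \<theta>" using K_prob th .
      have "emeasure (?N \<theta>) (C \<times> space MX) = emeasure (K \<theta>) ((\<lambda>x. (\<theta>, x)) -` (C \<times> space MX) \<inter> space (K \<theta>))"
        by (rule emeasure_distr[OF Kmeas[OF th] pair_measureI[OF C sets.top]])
      also have "\<dots> = indicator C \<theta>"
        using sets_eq_imp_space_eq[OF Ks[OF th]] Kp.emeasure_space_1 by (auto simp: indicator_def)
      finally show "emeasure (?N \<theta>) (C \<times> space MX) = indicator C \<theta>" .
    qed
    also have "\<dots> = emeasure r C" using C by simp
    finally show ?thesis .
  qed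
  have "emeasure (joint_law r MX K) (space (joint_law r MX K)) = 1"
    using e[of "space r"] SP r_prob prob_space.emeasure_space_1 by fastforce
  then show "prob_space (joint_law r MX K)" by (rule prob_spaceI)
  show "measure (joint_law r MX K) (A \<times> space MX) = measure r A"
    using e[OF A] by (simp add: measure_def)
qed
lemma comb_count:
  fixes I :: "nat set" and P :: "nat \<Rightarrow> bool" and S :: "nat \<Rightarrow> real" and \<alpha> :: real
  assumes fin: "finite I" and apos: "0 < \<alpha>"
  shows "real (card {j\<in>I. P j \<and> real (card {i\<in>I-{j}. P i \<and> S i \<le> S j}) + 1 < \<alpha> * real (card {i\<in>I. P i})})
         \<le> \<alpha> * real (card {i\<in>I. P i})"
proof -
  define G where "G = {j\<in>I. P j \<and> real (card {i\<in>I-{j}. P i \<and> S i \<le> S j}) + 1 < \<alpha> * real (card {i\<in>I. P i})}"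
  show ?thesis
  proof (cases "G = {}")
    case True
    then show ?thesis using apos unfolding G_def[symmetric] by simp
  next
    case False
    have fG: "finite G" using fin unfolding G_def by simp
    obtain j0 where j0: "j0 \<in> G" "S j0 = Max (S ` G)"
      using Max_in[of "S ` G"] fG False by (metis (no_types, lifting) empty_is_image finite_imageI imageE)
    have le: "\<And>j. j \<in> G \<Longrightarrow> S j \<le> S j0" using j0 fG by simp
    have sub: "G \<subseteq> insert j0 {i\<in>I-{j0}. P i \<and> S i \<le> S j0}"
      using le unfolding G_def by blast
    have "card G \<le> card (insert j0 {i\<in>I-{j0}. P i \<and> S i \<le> S j0})"
      by (rule card_mono) (use fin sub in auto)
    also have "\<dots> = card {i\<in>I-{j0}. P i \<and> S i \<le> S j0} + 1"
      using fin by (simp add: card_insert_if)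
    finally have "real (card G) \<le> real (card {i\<in>I-{j0}. P i \<and> S i \<le> S j0}) + 1" by linarith
    also have "\<dots> < \<alpha> * real (card {i\<in>I. P i})" using j0(1) unfolding G_def by blast
    finally show ?thesis unfolding G_def by simp
  qed
qed

lemma C_hat_iff:
  "(C_hat \<tau> \<alpha> B A s \<le> ereal t0) \<longleftrightarrow> (\<alpha> \<le> H_hat \<tau> B A s t0)"
proof
  assume "\<alpha> \<le> H_hat \<tau> B A s t0"
  then show "C_hat \<tau> \<alpha> B A s \<le> ereal t0" unfolding C_hat_def by (auto intro!: Inf_lower)
next
  assume C: "C_hat \<tau> \<alpha> B A s \<le> ereal t0"
  show "\<alpha> \<le> H_hat \<tau> B A s t0"
  proof (rule ccontr)
    assume nlt: "\<not> \<alpha> \<le> H_hat \<tau> B A s t0"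
    let ?I = "I_set B A s"
    let ?v = "\<lambda>b. \<tau> (snd (s b)) (fst (s b))"
    have finI: "finite ?I" unfolding I_set_def by simp
    have Hmono: "H_hat \<tau> B A s t \<le> H_hat \<tau> B A s t0"
      if "{b\<in>?I. ?v b \<le> t} \<subseteq> {b\<in>?I. ?v b \<le> t0}" for t
    proof -
      have "(\<Sum>b\<in>?I. if ?v b \<le> t then 1 else 0::real) \<le> (\<Sum>b\<in>?I. if ?v b \<le> t0 then 1 else 0)"
        by (rule sum_mono) (use that in auto)
      then show ?thesis unfolding H_hat_def
        by (intro mult_left_mono) auto
    qed
    have key: "\<exists>b\<in>?I. t0 < ?v b \<and> ?v b \<le> t" if "\<alpha> \<le> H_hat \<tau> B A s t" for t
    proof (rule ccontr)
      assume "\<not> ?thesis"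
      then have "{b\<in>?I. ?v b \<le> t} \<subseteq> {b\<in>?I. ?v b \<le> t0}" by force
      then have "H_hat \<tau> B A s t \<le> H_hat \<tau> B A s t0" by (rule Hmono)
      then show False using that nlt by linarith
    qed
    define D where "D = {?v b | b. b \<in> ?I \<and> t0 < ?v b}"
    have finD: "finite D" unfolding D_def using finI by simp
    show False
    proof (cases "D = {}")
      case True
      then have "{ereal t | t. \<alpha> \<le> H_hat \<tau> B A s t} = {}" using key unfolding D_def by blast
      then show False using C unfolding C_hat_def by (simp add: top_ereal_def)
    next
      case False
      have "Min D \<in> D" using finD False by simp
      then have t0m: "t0 < Min D" unfolding D_def by auto
      have "ereal (Min D) \<le> C_hat \<tau> \<alpha> B A s" unfolding C_hat_def
      proof (rule Inf_greatest)
        fix y assume "y \<in> {ereal t | t. \<alpha> \<le> H_hat \<tau> B A s t}"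
        then obtain t where y: "y = ereal t" and t: "\<alpha> \<le> H_hat \<tau> B A s t" by blast
        obtain b where b: "b \<in> ?I" "t0 < ?v b" "?v b \<le> t" using key[OF t] by blast
        have "?v b \<in> D" using b unfolding D_def by blast
        then have "Min D \<le> ?v b" using finD by simp
        then show "ereal (Min D) \<le> y" using b y by simp
      qed
      then have "ereal (Min D) \<le> ereal t0" using C by (rule order_trans)
      then show False using t0m by simp
    qed
  qed
qed
lemma SS_eq_distr:
  fixes J :: "'a measure" and B :: nat
  assumes Jp: "prob_space J"
  shows "(\<Pi>\<^sub>M b\<in>{1..B}. J) \<Otimes>\<^sub>M J = distr (\<Pi>\<^sub>M i\<in>insert 0 {1..B}. J) ((\<Pi>\<^sub>M b\<in>{1..B}. J) \<Otimes>\<^sub>M J) (\<lambda>f. (restrict f {1..B}, f 0))"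
proof -
  define I where "I = insert (0::nat) {1..B}"
  define P1 where "P1 = (\<Pi>\<^sub>M b\<in>{1..B}. J)"
  define Q where "Q = (\<Pi>\<^sub>M i\<in>I. J)"
  define SS where "SS = P1 \<Otimes>\<^sub>M J"
  define g where "g = (\<lambda>f::nat \<Rightarrow> 'a. (restrict f {1..B}, f 0))"
  define k where "k = (\<lambda>(f::nat \<Rightarrow> 'a, y). f(0 := y))"
  interpret J: prob_space J by fact
  interpret PS: product_sigma_finite "\<lambda>_::nat. J" by unfold_locales
  interpret P1: prob_space P1 unfolding P1_def by (rule prob_space_PiM) (rule Jp)
  interpret Q: prob_space Q unfolding Q_def by (rule prob_space_PiM) (rule Jp)
  interpret SS: pair_prob_space P1 J by unfold_locales
  have km: "k \<in> SS \<rightarrow>\<^sub>M Q"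
    unfolding k_def SS_def Q_def P1_def I_def by (rule measurable_add_dim)
  have gm: "g \<in> Q \<rightarrow>\<^sub>M SS"
    unfolding g_def SS_def Q_def P1_def I_def
    by (intro measurable_Pair measurable_restrict_subset measurable_component_singleton) auto
  have Qeq: "distr SS Q k = Q"
    unfolding Q_def
  proof (rule PS.PiM_eqI)
    show "finite I" unfolding I_def by simp
    show "sets (distr SS (Pi\<^sub>M I (\<lambda>_. J)) k) = sets (Pi\<^sub>M I (\<lambda>_. J))" by simp
    fix A assume A: "\<And>i. i \<in> I \<Longrightarrow> A i \<in> sets J"
    have pre: "k -` Pi\<^sub>E I A \<inter> space SS = Pi\<^sub>E {1..B} A \<times> A 0"
      using A[THEN sets.sets_into_space]
      by (auto simp: k_def SS_def P1_def I_def space_pair_measure space_PiM PiE_iff extensional_def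
          split: if_splits) (metis One_nat_def atLeastAtMost_iff subsetD)
    have "emeasure (distr SS (Pi\<^sub>M I (\<lambda>_. J)) k) (Pi\<^sub>E I A) = emeasure SS (k -` Pi\<^sub>E I A \<inter> space SS)"
      using km A unfolding Q_def by (intro emeasure_distr) (auto intro!: sets_PiM_I_finite simp: I_def)
    also have "\<dots> = emeasure SS (Pi\<^sub>E {1..B} A \<times> A 0)" by (simp only: pre)
    also have "\<dots> = emeasure P1 (Pi\<^sub>E {1..B} A) * emeasure J (A 0)"
      unfolding SS_def using A by (intro J.emeasure_pair_measure_Times) (auto simp: P1_def I_def intro!: sets_PiM_I_finite)
    also have "\<dots> = (\<Prod>i\<in>{1..B}. emeasure J (A i)) * emeasure J (A 0)"
      unfolding P1_def using A by (subst PS.emeasure_PiM) (auto simp: I_def)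
    also have "\<dots> = (\<Prod>i\<in>I. emeasure J (A i))"
      unfolding I_def by (simp add: mult.commute)
    finally show "emeasure (distr SS (Pi\<^sub>M I (\<lambda>_. J)) k) (Pi\<^sub>E I A) = (\<Prod>i\<in>I. emeasure J (A i))" .
  qed
  have "distr Q SS g = distr (distr SS Q k) SS g" by (simp add: Qeq)
  also have "\<dots> = distr SS SS (g \<circ> k)" by (rule distr_distr[OF gm km])
  also have "\<dots> = distr SS SS (\<lambda>x. x)"
  proof (rule distr_cong)
    fix x assume "x \<in> space SS"
    then show "(g \<circ> k) x = x"
      by (auto simp: g_def k_def SS_def P1_def space_pair_measure space_PiM PiE_def extensional_def restrict_def fun_eq_iff)
  qed simp_all
  also have "\<dots> = SS" by simp
  finally show ?thesis unfolding SS_def P1_def Q_def I_def g_def by simp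
qed
lemma card_filter_sum: "finite X \<Longrightarrow> real (card {i\<in>X. \<phi> i}) = (\<Sum>i\<in>X. if \<phi> i then 1 else 0)"
  by (simp add: sum.If_cases Int_def)

definition sw :: "nat \<Rightarrow> nat \<Rightarrow> nat" where
  "sw j n = (if n = 0 then j else if n = j then 0 else n)"

lemma sw_invol[simp]: "sw j (sw j n) = n"
  by (auto simp: sw_def)

lemma sw_in: "j \<in> I \<Longrightarrow> 0 \<in> I \<Longrightarrow> n \<in> I \<Longrightarrow> sw j n \<in> I"
  by (auto simp: sw_def)

lemma card_sw:
  assumes j: "j \<in> I" and z: "0 \<in> I"
  shows "card {i\<in>I-{0}. \<phi> (sw j i)} = card {i\<in>I-{j}. \<phi> i}"
    and "card {i\<in>I. \<phi> (sw j i)} = card {i\<in>I. \<phi> i}"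
proof -
  have "bij_betw (sw j) {i\<in>I-{0}. \<phi> (sw j i)} {i\<in>I-{j}. \<phi> i}"
    by (rule bij_betw_byWitness[where f'="sw j"]) (use j z in \<open>auto simp: sw_def\<close>)
  then show "card {i\<in>I-{0}. \<phi> (sw j i)} = card {i\<in>I-{j}. \<phi> i}" by (rule bij_betw_same_card)
  have "bij_betw (sw j) {i\<in>I. \<phi> (sw j i)} {i\<in>I. \<phi> i}"
    by (rule bij_betw_byWitness[where f'="sw j"]) (use j z in \<open>auto simp: sw_def\<close>)
  then show "card {i\<in>I. \<phi> (sw j i)} = card {i\<in>I. \<phi> i}" by (rule bij_betw_same_card)
qed
lemma exch_Q:
  fixes J :: "'a measure" and P :: "'a \<Rightarrow> bool" and S :: "'a \<Rightarrow> real" and I :: "nat set" and \<alpha> :: real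
  assumes Jp: "prob_space J" and Pm: "Measurable.pred J P" and Sm: "S \<in> borel_measurable J"
    and apos: "0 < \<alpha>" and finI: "finite I" and z: "0 \<in> I"
  defines "Q \<equiv> (\<Pi>\<^sub>M i\<in>I. J)"
  defines "Ev \<equiv> \<lambda>j. {f\<in>space Q. P (f j) \<and> real (card {i\<in>I-{j}. P (f i) \<and> S (f i) \<le> S (f j)}) + 1 < \<alpha> * real (card {i\<in>I. P (f i)})}"
  defines "Av \<equiv> \<lambda>j. {f\<in>space Q. P (f j)}"
  shows "measure Q (Ev 0) \<le> \<alpha> * measure Q (Av 0)" and "Ev 0 \<in> sets Q"
proof -
  interpret J: prob_space J by fact
  interpret Q: prob_space Q unfolding Q_def by (rule prob_space_PiM) (rule Jp)
  have comp: "(\<lambda>f. f i) \<in> Q \<rightarrow>\<^sub>M J" if "i \<in> I" for i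
    unfolding Q_def using that by (rule measurable_component_singleton)
  have Pc: "Measurable.pred Q (\<lambda>f. P (f i))" if "i \<in> I" for i
    using measurable_compose[OF comp[OF that] Pm] .
  have Sc: "(\<lambda>f. S (f i)) \<in> borel_measurable Q" if "i \<in> I" for i
    using measurable_compose[OF comp[OF that] Sm] .
  have Evs: "Ev j \<in> sets Q" if j: "j \<in> I" for j
  proof -
    have "Ev j = {f\<in>space Q. P (f j) \<and> (\<Sum>i\<in>I. if i \<noteq> j \<and> P (f i) \<and> S (f i) \<le> S (f j) then 1 else 0) + 1 < \<alpha> * (\<Sum>i\<in>I. if P (f i) then 1 else (0::real))}"
      unfolding Ev_def using finI by (simp add: card_filter_sum)
    also have "\<dots> \<in> sets Q"
    proof -
      have Ps: "{f\<in>space Q. P (f i)} \<in> sets Q" if i: "i \<in> I" for i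
        using Pc[OF i] unfolding pred_def .
      have m1: "(\<lambda>f. \<Sum>i\<in>I. if i \<noteq> j \<and> P (f i) \<and> S (f i) \<le> S (f j) then 1 else (0::real)) \<in> borel_measurable Q"
      proof (rule borel_measurable_sum)
        fix i assume i: "i \<in> I"
        have "{f\<in>space Q. i \<noteq> j \<and> P (f i) \<and> S (f i) \<le> S (f j)} =
              (if i \<noteq> j then {f\<in>space Q. P (f i)} \<inter> {f\<in>space Q. S (f i) \<le> S (f j)} else {})" by auto
        also have "\<dots> \<in> sets Q"
          using sets.Int[OF Ps[OF i] borel_measurable_le[OF Sc[OF i] Sc[OF j]]] sets.empty_sets by (cases "i = j") simp_all
        finally have "{f\<in>space Q. i \<noteq> j \<and> P (f i) \<and> S (f i) \<le> S (f j)} \<in> sets Q" .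
        then show "(\<lambda>f. if i \<noteq> j \<and> P (f i) \<and> S (f i) \<le> S (f j) then 1 else (0::real)) \<in> borel_measurable Q"
          by (intro measurable_If borel_measurable_const)
      qed
      have m2: "(\<lambda>f. \<Sum>i\<in>I. if P (f i) then 1 else (0::real)) \<in> borel_measurable Q"
      proof (rule borel_measurable_sum)
        fix i assume i: "i \<in> I"
        show "(\<lambda>f. if P (f i) then 1 else (0::real)) \<in> borel_measurable Q"
          using Ps[OF i] by (intro measurable_If borel_measurable_const)
      qed
      have "{f\<in>space Q. P (f j) \<and> (\<Sum>i\<in>I. if i \<noteq> j \<and> P (f i) \<and> S (f i) \<le> S (f j) then 1 else 0) + 1 < \<alpha> * (\<Sum>i\<in>I. if P (f i) then 1 else (0::real))}
          = {f\<in>space Q. P (f j)} \<inter> {f\<in>space Q. (\<Sum>i\<in>I. if i \<noteq> j \<and> P (f i) \<and> S (f i) \<le> S (f j) then 1 else 0) + 1 < \<alpha> * (\<Sum>i\<in>I. if P (f i) then 1 else (0::real))}"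
        by auto
      also have "\<dots> \<in> sets Q"
        by (rule sets.Int[OF Ps[OF j] borel_measurable_less[OF borel_measurable_add[OF m1 borel_measurable_const] borel_measurable_times[OF borel_measurable_const m2]]])
      finally show ?thesis .
    qed
    finally show ?thesis .
  qed
  have Avs: "Av j \<in> sets Q" if j: "j \<in> I" for j
    unfolding Av_def using Pc[OF j] unfolding pred_def .
  define T where "T = (\<lambda>j (f::nat \<Rightarrow> 'a). \<lambda>n\<in>I. f (sw j n))"
  have Tdistr: "distr Q Q (T j) = Q" if j: "j \<in> I" for j
  proof -
    have "distr (Pi\<^sub>M I (\<lambda>_. J)) (\<Pi>\<^sub>M i\<in>I. (\<lambda>_. J) (sw j i)) (\<lambda>\<omega>. \<lambda>n\<in>I. \<omega> (sw j n)) = (\<Pi>\<^sub>M i\<in>I. (\<lambda>_. J) (sw j i))"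
    proof (rule distr_PiM_reindex)
      show "inj_on (sw j) I" by (metis inj_on_inverseI sw_invol)
      show "sw j \<in> I \<rightarrow> I" using sw_in[OF j z] by blast
    qed (rule Jp)
    then show ?thesis unfolding Q_def T_def by simp
  qed
  have Tm: "T j \<in> Q \<rightarrow>\<^sub>M Q" if j: "j \<in> I" for j
  proof -
    have "T j \<in> Q \<rightarrow>\<^sub>M Q" unfolding T_def Q_def
      by (rule measurable_restrict) (rule measurable_component_singleton, rule sw_in[OF j z])
    then show ?thesis .
  qed
  have Tspace: "T j f \<in> space Q" if j: "j \<in> I" and f: "f \<in> space Q" for j f
    using measurable_space[OF Tm[OF j] f] .
  have cardT: "card {i\<in>I-{0}. P (T j f i) \<and> S (T j f i) \<le> S (T j f 0)} = card {i\<in>I-{j}. P (f i) \<and> S (f i) \<le> S (f j)}"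
     "card {i\<in>I. P (T j f i)} = card {i\<in>I. P (f i)}" "T j f 0 = f j"
    if j: "j \<in> I" for j f
  proof -
    have Tf: "\<And>n. n \<in> I \<Longrightarrow> T j f n = f (sw j n)" unfolding T_def by simp
    have c1: "{i\<in>I-{0}. P (T j f i) \<and> S (T j f i) \<le> S (T j f 0)} = {i\<in>I-{0}. P (f (sw j i)) \<and> S (f (sw j i)) \<le> S (f j)}"
      using Tf z by (auto simp: sw_def)
    have c2: "{i\<in>I. P (T j f i)} = {i\<in>I. P (f (sw j i))}"
      using Tf by auto
    show "card {i\<in>I-{0}. P (T j f i) \<and> S (T j f i) \<le> S (T j f 0)} = card {i\<in>I-{j}. P (f i) \<and> S (f i) \<le> S (f j)}"
      unfolding c1 by (rule card_sw(1)[OF j z, of "\<lambda>n. P (f n) \<and> S (f n) \<le> S (f j)"])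
    show "card {i\<in>I. P (T j f i)} = card {i\<in>I. P (f i)}"
      unfolding c2 by (rule card_sw(2)[OF j z, of "\<lambda>n. P (f n)"])
    show "T j f 0 = f j" using Tf[OF z] by (simp add: sw_def)
  qed
  have pre: "T j -` Ev 0 \<inter> space Q = Ev j" if j: "j \<in> I" for j
  proof -
    have "T j -` Ev 0 \<inter> space Q = {f\<in>space Q. P (T j f 0) \<and> real (card {i\<in>I-{0}. P (T j f i) \<and> S (T j f i) \<le> S (T j f 0)}) + 1 < \<alpha> * real (card {i\<in>I. P (T j f i)})}"
      unfolding Ev_def using Tspace[OF j] by blast
    also have "\<dots> = Ev j" unfolding Ev_def
      by (simp only: cardT(1)[OF j], simp only: cardT(2)[OF j] cardT(3)[OF j])
    finally show ?thesis .
  qed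
  have preA: "T j -` Av 0 \<inter> space Q = Av j" if j: "j \<in> I" for j
    unfolding Av_def T_def using Tspace[OF j] z by (auto simp: sw_def T_def)
  have EvEq: "measure Q (Ev j) = measure Q (Ev 0)" if j: "j \<in> I" for j
  proof -
    have "measure Q (Ev 0) = measure (distr Q Q (T j)) (Ev 0)" by (simp add: Tdistr[OF j])
    also have "\<dots> = measure Q (T j -` Ev 0 \<inter> space Q)" by (rule measure_distr[OF Tm[OF j] Evs[OF z]])
    finally show ?thesis using pre[OF j] by simp
  qed
  have AvEq: "measure Q (Av j) = measure Q (Av 0)" if j: "j \<in> I" for j
  proof -
    have "measure Q (Av 0) = measure (distr Q Q (T j)) (Av 0)" by (simp add: Tdistr[OF j])
    also have "\<dots> = measure Q (T j -` Av 0 \<inter> space Q)" by (rule measure_distr[OF Tm[OF j] Avs[OF z]])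
    finally show ?thesis using preA[OF j] by simp
  qed
  have pw: "(\<Sum>j\<in>I. indicator (Ev j) f) \<le> \<alpha> * (\<Sum>j\<in>I. indicator (Av j) f :: real)" if f: "f \<in> space Q" for f
  proof -
    have "(\<Sum>j\<in>I. indicator (Ev j) f :: real) = real (card {j\<in>I. f \<in> Ev j})"
      using card_filter_sum[OF finI, of "\<lambda>j. f \<in> Ev j"] by (simp add: indicator_def of_bool_def)
    also have "{j\<in>I. f \<in> Ev j} = {j\<in>I. P (f j) \<and> real (card {i\<in>I-{j}. P (f i) \<and> S (f i) \<le> S (f j)}) + 1 < \<alpha> * real (card {i\<in>I. P (f i)})}"
      using f unfolding Ev_def by blast
    also have "real (card \<dots>) \<le> \<alpha> * real (card {i\<in>I. P (f i)})"
      by (rule comb_count[OF finI apos])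
    also have "real (card {i\<in>I. P (f i)}) = (\<Sum>j\<in>I. indicator (Av j) f :: real)"
      using card_filter_sum[OF finI, of "\<lambda>j. P (f j)"] f by (simp add: indicator_def of_bool_def Av_def)
    finally show ?thesis .
  qed
  have "(\<Sum>j\<in>I. measure Q (Ev j)) = (\<integral>f. (\<Sum>j\<in>I. indicator (Ev j) f) \<partial>Q)"
    by (subst Bochner_Integration.integral_sum) (auto intro!: sum.cong integrable_real_indicator simp: Evs less_top[symmetric])
  also have "\<dots> \<le> (\<integral>f. \<alpha> * (\<Sum>j\<in>I. indicator (Av j) f) \<partial>Q)"
    by (rule integral_mono) (auto intro!: pw integrable_real_indicator simp: Evs Avs less_top[symmetric])
  also have "\<dots> = \<alpha> * (\<Sum>j\<in>I. measure Q (Av j))"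
    by (subst Bochner_Integration.integral_mult_right_zero, subst Bochner_Integration.integral_sum) (auto intro!: sum.cong integrable_real_indicator simp: Avs less_top[symmetric])
  finally have "(\<Sum>j\<in>I. measure Q (Ev j)) \<le> \<alpha> * (\<Sum>j\<in>I. measure Q (Av j))" .
  then have "real (card I) * measure Q (Ev 0) \<le> \<alpha> * (real (card I) * measure Q (Av 0))"
    using EvEq AvEq by simp
  moreover have "real (card I) > 0" using finI z by (auto simp: card_gt_0_iff)
  ultimately show "measure Q (Ev 0) \<le> \<alpha> * measure Q (Av 0)" by (simp add: mult.left_commute)
  show "Ev 0 \<in> sets Q" by (rule Evs[OF z])
qed
lemma H_hat_form:
  "H_hat \<tau> B A s t = (real (card {b\<in>{1..B}. fst (s b) \<in> A \<and> \<tau> (snd (s b)) (fst (s b)) \<le> t}) + 1)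
      / (real (card {b\<in>{1..B}. fst (s b) \<in> A}) + 1)"
proof -
  have fin: "finite (I_set B A s)" unfolding I_set_def by simp
  have "(\<Sum>b\<in>I_set B A s. if \<tau> (snd (s b)) (fst (s b)) \<le> t then 1 else 0) = real (card {b\<in>I_set B A s. \<tau> (snd (s b)) (fst (s b)) \<le> t})"
    by (rule card_filter_sum[OF fin, symmetric])
  moreover have "{b\<in>I_set B A s. \<tau> (snd (s b)) (fst (s b)) \<le> t} = {b\<in>{1..B}. fst (s b) \<in> A \<and> \<tau> (snd (s b)) (fst (s b)) \<le> t}"
    unfolding I_set_def by blast
  ultimately show ?thesis unfolding H_hat_def by (simp add: I_set_def)
qed

lemma cell_eq:
  assumes "disjoint \<A>" "A \<in> \<A>" "\<theta> \<in> A"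
  shows "cell \<A> \<theta> = A"
  unfolding cell_def
proof (rule the_equality)
  show "A \<in> \<A> \<and> \<theta> \<in> A" using assms by blast
  fix A' assume "A' \<in> \<A> \<and> \<theta> \<in> A'"
  then show "A' = A" using assms disjointD[OF assms(1), of A' A] by blast
qed

lemma cover_iff:
  assumes "0 < \<alpha>"
  shows "(C_hat \<tau> \<alpha> B A s \<le> ereal t) \<longleftrightarrow>
     \<not> (real (card {b\<in>{1..B}. fst (s b) \<in> A \<and> \<tau> (snd (s b)) (fst (s b)) \<le> t}) + 1
          < \<alpha> * (real (card {b\<in>{1..B}. fst (s b) \<in> A}) + 1))"
  unfolding C_hat_iff H_hat_form
  by (simp add: le_divide_eq not_less add_pos_nonneg)
theorem theorem2:
  fixes r :: "'t measure" and MX :: "'x measure" and K :: "'t \<Rightarrow> 'x measure"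
    and \<tau> :: "'x \<Rightarrow> 't \<Rightarrow> real" and \<A> :: "'t set set" and A :: "'t set"
    and B :: nat and \<alpha> :: real
  assumes r_prob: "prob_space r"
    and K_meas: "K \<in> r \<rightarrow>\<^sub>M subprob_algebra MX"
    and K_prob: "\<And>\<theta>. \<theta> \<in> space r \<Longrightarrow> prob_space (K \<theta>)"
    and \<tau>_meas: "(\<lambda>(x, \<theta>). \<tau> x \<theta>) \<in> borel_measurable (MX \<Otimes>\<^sub>M r)"
    and \<tau>_cont: "\<And>\<theta> t. \<theta> \<in> space r \<Longrightarrow> measure (K \<theta>) {x \<in> space MX. \<tau> x \<theta> = t} = 0"
    and part_sets: "\<A> \<subseteq> sets r"
    and part_disj: "disjoint \<A>"
    and part_cover: "\<Union>\<A> = space r"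
    and A_in: "A \<in> \<A>"
    and A_pos: "measure r A > 0"
    and \<alpha>_pos: "0 < \<alpha>" and \<alpha>_lt: "\<alpha> < 1"
  shows "measure (sample_space r MX K B)
           {\<omega> \<in> space (sample_space r MX K B).
              fst (snd \<omega>) \<in> A \<and> fst (snd \<omega>) \<in> R_hat r \<A> \<tau> \<alpha> B (fst \<omega>) (snd (snd \<omega>))}
         / measure (sample_space r MX K B)
           {\<omega> \<in> space (sample_space r MX K B). fst (snd \<omega>) \<in> A}
         \<ge> 1 - \<alpha>"
proof -
  define J where "J = joint_law r MX K"
  define P where "P = (\<lambda>p::'t \<times> 'x. fst p \<in> A)"
  define Sf where "Sf = (\<lambda>p::'t \<times> 'x. \<tau> (snd p) (fst p))"
  define I where "I = insert (0::nat) {1..B}"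
  define P1 where "P1 = (\<Pi>\<^sub>M b\<in>{1..B}. J)"
  define Q where "Q = (\<Pi>\<^sub>M i\<in>I. J)"
  define SS where "SS = P1 \<Otimes>\<^sub>M J"
  define g where "g = (\<lambda>f::nat \<Rightarrow> 't \<times> 'x. (restrict f {1..B}, f 0))"
  define k where "k = (\<lambda>(f::nat \<Rightarrow> 't \<times> 'x, y). f(0 := y))"
  have As: "A \<in> sets r" using part_sets A_in by blast
  note JP = J_props[OF r_prob K_meas K_prob As, folded J_def]
  have Jp: "prob_space J" by (rule JP(3))
  interpret J: prob_space J by (rule Jp)
  interpret P1: prob_space P1 unfolding P1_def by (rule prob_space_PiM) (rule Jp)
  interpret Q: prob_space Q unfolding Q_def by (rule prob_space_PiM) (rule Jp)
  interpret SS: pair_prob_space P1 J by unfold_locales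
  interpret SSp: prob_space SS unfolding SS_def by (rule SS.P.prob_space_axioms)
  have SSdef: "sample_space r MX K B = SS" unfolding sample_space_def SS_def P1_def J_def ..
  have Pm: "Measurable.pred J P"
  proof -
    have "Measurable.pred (r \<Otimes>\<^sub>M MX) (\<lambda>p. fst p \<in> A)"
      unfolding pred_def using measurable_sets[OF measurable_fst As] by (simp add: vimage_def Int_def conj_commute)
    then show ?thesis unfolding P_def by (subst measurable_cong_sets[OF JP(1) refl])
  qed
  have Sm: "Sf \<in> borel_measurable J"
  proof -
    have eq: "Sf = (\<lambda>(x, \<theta>). \<tau> x \<theta>) \<circ> (\<lambda>(x, y). (y, x))"
      unfolding Sf_def by (simp add: fun_eq_iff split_beta)
    have "Sf \<in> borel_measurable (r \<Otimes>\<^sub>M MX)"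
      unfolding eq by (rule measurable_comp[OF measurable_pair_swap' \<tau>_meas])
    then show ?thesis by (subst measurable_cong_sets[OF JP(1) refl])
  qed
  define Ev where "Ev = (\<lambda>j. {f\<in>space Q. P (f j) \<and> real (card {i\<in>I-{j}. P (f i) \<and> Sf (f i) \<le> Sf (f j)}) + 1 < \<alpha> * real (card {i\<in>I. P (f i)})})"
  define Av where "Av = (\<lambda>j. {f\<in>space Q. P (f j)})"
  have finI: "finite I" and z: "0 \<in> I" unfolding I_def by auto
  have ex: "measure Q (Ev 0) \<le> \<alpha> * measure Q (Av 0)"
    unfolding Ev_def Av_def Q_def by (rule exch_Q(1)[OF Jp Pm Sm \<alpha>_pos finI z])
  have Evs: "Ev 0 \<in> sets Q"
    unfolding Ev_def Q_def by (rule exch_Q(2)[OF Jp Pm Sm \<alpha>_pos finI z])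
  have SSd: "SS = distr Q SS g"
    unfolding SS_def P1_def Q_def g_def I_def by (rule SS_eq_distr[OF Jp])
  have gm: "g \<in> Q \<rightarrow>\<^sub>M SS"
    unfolding g_def SS_def Q_def P1_def I_def
    by (intro measurable_Pair measurable_restrict_subset measurable_component_singleton) auto
  have km: "k \<in> SS \<rightarrow>\<^sub>M Q"
    unfolding k_def SS_def Q_def P1_def I_def by (rule measurable_add_dim)
  define Mis where "Mis = {\<omega>\<in>space SS. P (snd \<omega>) \<and> real (card {b\<in>{1..B}. P (fst \<omega> b) \<and> Sf (fst \<omega> b) \<le> Sf (snd \<omega>)}) + 1 < \<alpha> * (real (card {b\<in>{1..B}. P (fst \<omega> b)}) + 1)}"
  define Aset where "Aset = {\<omega>\<in>space SS. P (snd \<omega>)}"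
  have I0: "I - {0} = {1..B}" unfolding I_def by auto
  have cardI: "real (card {i\<in>I. P (f i)}) = real (card {b\<in>{1..B}. P (f b)}) + 1" if "P (f 0)" for f
  proof -
    have "{i\<in>I. P (f i)} = insert 0 {b\<in>{1..B}. P (f b)}" using that unfolding I_def by auto
    then show ?thesis by simp
  qed
  have Ev0: "Ev 0 = {f\<in>space Q. P (f 0) \<and> real (card {b\<in>{1..B}. P (f b) \<and> Sf (f b) \<le> Sf (f 0)}) + 1 < \<alpha> * (real (card {b\<in>{1..B}. P (f b)}) + 1)}"
    unfolding Ev_def I0 using cardI by auto
  have spSS: "space SS = space P1 \<times> space J" unfolding SS_def by (simp add: space_pair_measure)
  have Mis_k: "Mis = k -` Ev 0 \<inter> space SS"
  proof (intro set_eqI)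
    fix \<omega> show "\<omega> \<in> Mis \<longleftrightarrow> \<omega> \<in> k -` Ev 0 \<inter> space SS"
    proof (cases "\<omega> \<in> space SS")
      case False then show ?thesis unfolding Mis_def by blast
    next
      case True
      obtain s y where w: "\<omega> = (s, y)" by (cases \<omega>)
      have ksp: "s(0 := y) \<in> space Q" using measurable_space[OF km True] unfolding w k_def by simp
      have e1: "{b\<in>{1..B}. P ((s(0 := y)) b) \<and> Sf ((s(0 := y)) b) \<le> Sf y} = {b\<in>{1..B}. P (s b) \<and> Sf (s b) \<le> Sf y}"
        by auto
      have e2: "{b\<in>{1..B}. P ((s(0 := y)) b)} = {b\<in>{1..B}. P (s b)}" by auto
      have "\<omega> \<in> k -` Ev 0 \<inter> space SS \<longleftrightarrow> s(0 := y) \<in> Ev 0" using True unfolding w k_def by simp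
      also have "\<dots> \<longleftrightarrow> P y \<and> real (card {b\<in>{1..B}. P (s b) \<and> Sf (s b) \<le> Sf y}) + 1 < \<alpha> * (real (card {b\<in>{1..B}. P (s b)}) + 1)"
        unfolding Ev0 mem_Collect_eq fun_upd_same e1 e2 using ksp by simp
      also have "\<dots> \<longleftrightarrow> \<omega> \<in> Mis" unfolding Mis_def w using True w by simp
      finally show ?thesis by simp
    qed
  qed
  have Mis_s: "Mis \<in> sets SS" unfolding Mis_k by (rule measurable_sets[OF km Evs])
  have Mis_g: "g -` Mis \<inter> space Q = Ev 0"
  proof (intro set_eqI)
    fix f show "f \<in> g -` Mis \<inter> space Q \<longleftrightarrow> f \<in> Ev 0"
    proof (cases "f \<in> space Q")
      case False then show ?thesis unfolding Ev0 by blast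
    next
      case True
      have gsp: "g f \<in> space SS" using measurable_space[OF gm True] .
      have e3: "{b\<in>{1..B}. P (restrict f {1..B} b) \<and> Sf (restrict f {1..B} b) \<le> Sf (f 0)} = {b\<in>{1..B}. P (f b) \<and> Sf (f b) \<le> Sf (f 0)}"
        by auto
      have e4: "{b\<in>{1..B}. P (restrict f {1..B} b)} = {b\<in>{1..B}. P (f b)}" by auto
      have "f \<in> g -` Mis \<inter> space Q \<longleftrightarrow> g f \<in> Mis" using True by simp
      also have "\<dots> \<longleftrightarrow> P (f 0) \<and> real (card {b\<in>{1..B}. P (f b) \<and> Sf (f b) \<le> Sf (f 0)}) + 1 < \<alpha> * (real (card {b\<in>{1..B}. P (f b)}) + 1)"
        using gsp unfolding Mis_def mem_Collect_eq g_def fst_conv snd_conv e3 e4 by simp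
      also have "\<dots> \<longleftrightarrow> f \<in> Ev 0" unfolding Ev0 using True by simp
      finally show ?thesis .
    qed
  qed
  have Aset_s: "Aset \<in> sets SS"
  proof -
    have "Aset = snd -` {x\<in>space J. P x} \<inter> space SS"
      unfolding Aset_def spSS by auto
    also have "\<dots> \<in> sets SS"
      unfolding SS_def by (rule measurable_sets[OF measurable_snd]) (use Pm in \<open>simp add: pred_def\<close>)
    finally show ?thesis .
  qed
  have Aset_g: "g -` Aset \<inter> space Q = Av 0"
    unfolding Aset_def Av_def using measurable_space[OF gm] by (auto simp: g_def)
  have mMis: "measure SS Mis = measure Q (Ev 0)"
    using measure_distr[OF gm Mis_s] Mis_g SSd by simp
  have mA: "measure SS Aset = measure Q (Av 0)"
    using measure_distr[OF gm Aset_s] Aset_g SSd by simp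
  have ApSS: "measure SS Aset = measure r A"
  proof -
    have Asp: "A \<subseteq> space r" using sets.sets_into_space[OF As] .
    have AX: "A \<times> space MX \<in> sets J" using pair_measureI[OF As sets.top, of MX] JP(1) by simp
    have "Aset = space P1 \<times> (A \<times> space MX)"
      unfolding Aset_def spSS P_def using Asp JP(2) by auto
    then have "emeasure SS Aset = emeasure P1 (space P1) * emeasure J (A \<times> space MX)"
      unfolding SS_def using J.emeasure_pair_measure_Times[OF sets.top AX] by simp
    then have "emeasure SS Aset = emeasure J (A \<times> space MX)" by (simp add: P1.emeasure_space_1)
    then have "measure SS Aset = measure J (A \<times> space MX)" by (simp add: measure_def)
    then show ?thesis using JP(4) by simp
  qed
  have Cov: "{\<omega> \<in> space SS. fst (snd \<omega>) \<in> A \<and> fst (snd \<omega>) \<in> R_hat r \<A> \<tau> \<alpha> B (fst \<omega>) (snd (snd \<omega>))} = Aset - Mis"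
  proof (intro set_eqI)
    fix \<omega> show "\<omega> \<in> {\<omega> \<in> space SS. fst (snd \<omega>) \<in> A \<and> fst (snd \<omega>) \<in> R_hat r \<A> \<tau> \<alpha> B (fst \<omega>) (snd (snd \<omega>))} \<longleftrightarrow> \<omega> \<in> Aset - Mis"
    proof (cases "\<omega> \<in> space SS \<and> fst (snd \<omega>) \<in> A")
      case False then show ?thesis unfolding Aset_def P_def by blast
    next
      case True
      obtain s \<theta> x where w: "\<omega> = (s, (\<theta>, x))" by (cases \<omega>) auto
      have th: "\<theta> \<in> A" "\<theta> \<in> space r" using True JP(2) unfolding w spSS by auto
      have ce: "cell \<A> \<theta> = A" by (rule cell_eq[OF part_disj A_in th(1)])
      have "\<theta> \<in> R_hat r \<A> \<tau> \<alpha> B s x \<longleftrightarrow> C_hat \<tau> \<alpha> B A s \<le> ereal (\<tau> x \<theta>)"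
        unfolding R_hat_def using th ce by simp
      also have "\<dots> \<longleftrightarrow> \<not> (real (card {b\<in>{1..B}. fst (s b) \<in> A \<and> \<tau> (snd (s b)) (fst (s b)) \<le> \<tau> x \<theta>}) + 1
          < \<alpha> * (real (card {b\<in>{1..B}. fst (s b) \<in> A}) + 1))"
        by (rule cover_iff[OF \<alpha>_pos])
      finally show ?thesis using True unfolding w Aset_def Mis_def P_def Sf_def by auto
    qed
  qed
  have MisA: "Mis \<subseteq> Aset" unfolding Mis_def Aset_def by blast
  have "measure SS (Aset - Mis) = measure SS Aset - measure SS Mis"
    by (rule SSp.finite_measure_Diff[OF Aset_s Mis_s MisA])
  also have "\<dots> \<ge> (1 - \<alpha>) * measure SS Aset" using ex mMis mA by (simp add: algebra_simps)
  finally have "(1 - \<alpha>) * measure SS Aset \<le> measure SS (Aset - Mis)" .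
  moreover have "measure SS Aset > 0" using ApSS A_pos by simp
  ultimately have "1 - \<alpha> \<le> measure SS (Aset - Mis) / measure SS Aset"
    by (simp add: pos_le_divide_eq)
  then show ?thesis unfolding SSdef using Cov unfolding Aset_def P_def by simp
qed

end
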